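(* Let $p\in(0,1)$ and let $G=(V,E)$ be an undirected graph with $n=|V|$, $m=|E|$. Consider the $\ell_p$ QRJA instance $\mathcal I(G)$ constructed from $G$. Then every optimal solution $\mathbf x$ of $\mathcal I(G)$ satisfies, after a global constant shift making $x_{v^{(s)}}=0$: $x_{v^{(t)}}=1$ and $x_u\in\{0,1\}$ for every $u\in V$.
   Context: An $\ell_p$ QRJA instance consists of candidates, judgments $(a,b,y)$ ("$a$ is better than $b$ by $y$") with nonnegative weights, and a solution $\mathbf x$ assigns a real number $x_a$ to each candidate $a$; its loss is $\sum w\,|x_a-x_b-y|^p$ summed over the weighted judgments $(a,b,y)$ with weight $w$; optimal solutions minimize the loss (the loss is invariant under adding a common constant to all coordinates). Construction of $\mathcal I(G)$: let $w_2=\frac{2n}{1-p}+1$ and $w_1=nw_2+1$. The candidates are $V\cup\{v^{(s)},v^{(t)}\}$ (two new candidates). The judgments are: $(v^{(t)},v^{(s)},1)$ with weight $w_1$; $(v^{(s)},u,0)$ with weight $w_2$ for each $u\in V$; $(v^{(t)},u,0)$ with weight $w_2$ for each $u\in V$; and both $(u,v,1)$ and $(v,u,1)$ with weight $1$ for each edge $\{u,v\}\in E$. *)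

theory Defs
  imports Complex_Main
begin

text \<open>A QRJA instance: a finite set of weighted judgments (a, b, y, w),
  meaning "a is better than b by y" with weight w.\<close>
type_synonym 'c qrja_instance = "('c \<times> 'c \<times> real \<times> real) set"

definition qrja_loss :: "real \<Rightarrow> 'c qrja_instance \<Rightarrow> ('c \<Rightarrow> real) \<Rightarrow> real" where
  "qrja_loss p J x = (\<Sum>(a, b, y, w)\<in>J. w * \<bar>x a - x b - y\<bar> powr p)"

definition qrja_optimal :: "real \<Rightarrow> 'c qrja_instance \<Rightarrow> ('c \<Rightarrow> real) \<Rightarrow> bool" where
  "qrja_optimal p J x \<longleftrightarrow> (\<forall>x'. qrja_loss p J x \<le> qrja_loss p J x')"

datatype 'a cand = Vert 'a | VS | VT

definition w2_of :: "real \<Rightarrow> nat \<Rightarrow> real" where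
  "w2_of p n = 2 * real n / (1 - p) + 1"

definition w1_of :: "real \<Rightarrow> nat \<Rightarrow> real" where
  "w1_of p n = real n * w2_of p n + 1"

text \<open>The instance I(G) for a graph with vertex set V and edge set E
  (edges are 2-element subsets of V).\<close>
definition IG :: "real \<Rightarrow> 'a set \<Rightarrow> 'a set set \<Rightarrow> 'a cand qrja_instance" where
  "IG p V E =
     {(VT, VS, 1, w1_of p (card V))}
   \<union> {(VS, Vert u, 0, w2_of p (card V)) | u. u \<in> V}
   \<union> {(VT, Vert u, 0, w2_of p (card V)) | u. u \<in> V}
   \<union> {(Vert u, Vert v, 1, 1) | u v. {u, v} \<in> E}"

end

theory Submission
  imports Defs "HOL-Analysis.Convex"
begin

lemma powr_subadd:
  fixes a b p :: real
  assumes "0 \<le> a" "0 \<le> b" "0 < p" "p \<le> 1"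
  shows "(a + b) powr p \<le> a powr p + b powr p"
proof (cases "a + b = 0")
  case True then have "a = 0" "b = 0" using assms by auto
  then show ?thesis by simp
next
  case False
  then have ab: "a + b > 0" using assms by auto
  define r where "r = a / (a + b)"
  have r0: "0 \<le> r" "r \<le> 1" using assms ab by (auto simp: r_def)
  have r1: "1 - r = b / (a + b)" using ab by (simp add: r_def field_simps)
  have "r \<le> r powr p" using powr_mono'[of p 1 r] r0 assms by simp
  moreover have "1 - r \<le> (1 - r) powr p" using powr_mono'[of p 1 "1 - r"] r0 assms by simp
  ultimately have "1 \<le> r powr p + (1 - r) powr p" by simp
  also have "\<dots> = (a powr p + b powr p) / (a + b) powr p"
    unfolding r1 unfolding r_def using assms by (simp add: powr_divide add_divide_distrib)
  finally show ?thesis using ab by (simp add: le_divide_eq)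
qed

lemma abs_powr_subadd:
  fixes a b p :: real
  assumes "0 < p" "p \<le> 1"
  shows "\<bar>a + b\<bar> powr p \<le> \<bar>a\<bar> powr p + \<bar>b\<bar> powr p"
proof -
  have "\<bar>a + b\<bar> powr p \<le> (\<bar>a\<bar> + \<bar>b\<bar>) powr p"
    by (rule powr_mono2) (use assms in auto)
  also have "\<dots> \<le> \<bar>a\<bar> powr p + \<bar>b\<bar> powr p" by (rule powr_subadd) (use assms in auto)
  finally show ?thesis .
qed

lemma bern_powr:
  fixes s L p :: real
  assumes "0 \<le> s" "s \<le> L" "0 < p" "p < 1"
  shows "(s + L) powr p \<le> L powr p + p * s powr p"
proof (cases "s = 0")
  case True then show ?thesis by simp
next
  case False
  then have s0: "s > 0" and L0: "L > 0" using assms by auto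
  define t where "t = s / L"
  have t0: "0 < t" "t \<le> 1" using s0 L0 assms by (auto simp: t_def)
  have "(1 + t) powr p * 1 powr (1 - p) \<le> p * (1 + t) + (1 - p) * 1"
    by (rule Youngs_inequality_0) (use t0 assms in auto)
  then have y: "(1 + t) powr p \<le> 1 + p * t" by (simp add: algebra_simps)
  have tt: "t \<le> t powr p" using powr_mono'[of p 1 t] t0 assms by simp
  have "(s + L) powr p = (L * (1 + t)) powr p" using L0 by (simp add: t_def algebra_simps)
  also have "\<dots> = L powr p * (1 + t) powr p" using L0 t0 by (simp add: powr_mult)
  also have "\<dots> \<le> L powr p * (1 + p * t powr p)"
    using y tt assms by (intro mult_left_mono) (auto intro: order_trans)
  also have "\<dots> = L powr p + p * (L * t) powr p" using L0 t0 by (simp add: powr_mult algebra_simps)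
  also have "L * t = s" using L0 by (simp add: t_def)
  finally show ?thesis .
qed

definition EP :: "'a set set \<Rightarrow> ('a \<times> 'a) set" where
  "EP E = {(u, v). {u, v} \<in> E}"

lemma EP_sub:
  assumes "\<forall>e\<in>E. \<exists>u v. u \<in> V \<and> v \<in> V \<and> u \<noteq> v \<and> e = {u, v}"
  shows "EP E \<subseteq> V \<times> V"
proof
  fix z assume "z \<in> EP E"
  then obtain u v where z: "z = (u, v)" "{u, v} \<in> E" by (auto simp: EP_def)
  then obtain u' v' where "u' \<in> V" "v' \<in> V" "{u, v} = {u', v'}" using assms by blast
  then have "u \<in> V" "v \<in> V" by (auto simp: doubleton_eq_iff)
  then show "z \<in> V \<times> V" using z by auto
qed

lemma loss_IG:
  fixes V :: "'a set" and x :: "'a cand \<Rightarrow> real"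
  assumes "finite V" "\<forall>e\<in>E. \<exists>u v. u \<in> V \<and> v \<in> V \<and> u \<noteq> v \<and> e = {u, v}"
  shows "qrja_loss p (IG p V E) x =
    w1_of p (card V) * \<bar>x VT - x VS - 1\<bar> powr p
    + (\<Sum>u\<in>V. w2_of p (card V) * (\<bar>x VS - x (Vert u)\<bar> powr p + \<bar>x VT - x (Vert u)\<bar> powr p))
    + (\<Sum>(u, v)\<in>EP E. \<bar>x (Vert u) - x (Vert v) - 1\<bar> powr p)"
proof -
  let ?w1 = "w1_of p (card V)" and ?w2 = "w2_of p (card V)"
  let ?f = "\<lambda>(a, b, y, w). w * \<bar>x a - x b - y\<bar> powr p"
  define B where "B = (\<lambda>u. (VS::'a cand, Vert u, 0::real, ?w2)) ` V"
  define C where "C = (\<lambda>u. (VT::'a cand, Vert u, 0::real, ?w2)) ` V"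
  define D where "D = (\<lambda>(u, v). (Vert u, Vert v, 1::real, 1::real)) ` EP E"
  have fEP: "finite (EP E)" using EP_sub[OF assms(2)] assms(1) by (meson finite_SigmaI finite_subset)
  have IG: "IG p V E = {(VT, VS, 1, ?w1)} \<union> B \<union> C \<union> D"
    unfolding IG_def B_def C_def D_def EP_def by auto
  have fin: "finite B" "finite C" "finite D" using assms(1) fEP by (auto simp: B_def C_def D_def)
  have "sum ?f (IG p V E) = ?f (VT, VS, 1, ?w1) + sum ?f B + sum ?f C + sum ?f D"
  proof -
    have d1: "({(VT, VS, 1, ?w1)} \<union> B \<union> C) \<inter> D = {}" by (auto simp: B_def C_def D_def)
    have d2: "({(VT, VS, 1, ?w1)} \<union> B) \<inter> C = {}" by (auto simp: B_def C_def)
    have d3: "{(VT, VS, 1, ?w1)} \<inter> B = {}" by (auto simp: B_def)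
    show ?thesis unfolding IG
      using sum.union_disjoint[OF _ _ d1, of ?f] sum.union_disjoint[OF _ _ d2, of ?f]
        sum.union_disjoint[OF _ _ d3, of ?f] fin by simp
  qed
  also have "sum ?f B = (\<Sum>u\<in>V. ?w2 * \<bar>x VS - x (Vert u)\<bar> powr p)"
    unfolding B_def by (subst sum.reindex) (auto simp: inj_on_def)
  also have "sum ?f C = (\<Sum>u\<in>V. ?w2 * \<bar>x VT - x (Vert u)\<bar> powr p)"
    unfolding C_def by (subst sum.reindex) (auto simp: inj_on_def)
  also have "sum ?f D = (\<Sum>(u, v)\<in>EP E. \<bar>x (Vert u) - x (Vert v) - 1\<bar> powr p)"
    unfolding D_def by (subst sum.reindex) (auto simp: inj_on_def intro!: sum.cong)
  finally show ?thesis unfolding qrja_loss_def by (simp add: sum.distrib distrib_left)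
qed

lemma stepA_ineq:
  fixes p s L d w2 n :: real
  assumes "0 < p" "p < 1" "0 < s" "s \<le> L" "\<bar>d\<bar> \<le> s + L" "w2 * (1 - p) = 2 * n + (1 - p)" "w2 > 0"
  shows "w2 * \<bar>d\<bar> powr p + 2 * n * s powr p < w2 * (s powr p + L powr p)"
proof -
  have "\<bar>d\<bar> powr p \<le> (s + L) powr p" by (rule powr_mono2) (use assms in auto)
  also have "\<dots> \<le> L powr p + p * s powr p" by (rule bern_powr) (use assms in auto)
  finally have h: "\<bar>d\<bar> powr p \<le> L powr p + p * s powr p" .
  have sp: "s powr p > 0" using assms by simp
  have "w2 * \<bar>d\<bar> powr p \<le> w2 * (L powr p + p * s powr p)" using h assms by (intro mult_left_mono) auto
  moreover have "2 * n * s powr p < w2 * (1 - p) * s powr p"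
    using assms(6) sp assms(2) by (simp add: mult_strict_right_mono)
  ultimately show ?thesis by (simp add: algebra_simps)
qed

lemma pair_ineq:
  fixes p d A B :: real
  assumes "0 < p" "p < 1" "A = 0 \<or> A = d" "B = 0 \<or> B = d"
  defines "bA \<equiv> (if A = 0 then 0 else 1::real)" and "bB \<equiv> (if B = 0 then 0 else 1::real)"
  shows "\<bar>bA - bB - 1\<bar> powr p + \<bar>bB - bA - 1\<bar> powr p \<le> \<bar>A - B - 1\<bar> powr p + \<bar>B - A - 1\<bar> powr p"
proof (cases "A = B")
  case True then show ?thesis by (simp add: bA_def bB_def)
next
  case False
  have key: "2 powr p \<le> \<bar>d - 1\<bar> powr p + \<bar>- d - 1\<bar> powr p"
    using abs_powr_subadd[of p "1 - d" "d + 1"] assms by (simp add: abs_minus_commute add.commute)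
  from False assms(3,4) have "(A = d \<and> B = 0 \<and> d \<noteq> 0) \<or> (A = 0 \<and> B = d \<and> d \<noteq> 0)" by auto
  then show ?thesis
  proof
    assume h: "A = d \<and> B = 0 \<and> d \<noteq> 0"
    then show ?thesis using key by (simp add: bA_def bB_def)
  next
    assume h: "A = 0 \<and> B = d \<and> d \<noteq> 0"
    then show ?thesis using key by (simp add: bA_def bB_def add.commute)
  qed
qed

theorem mainTheorem6:
  fixes p :: real and V :: "'a set" and E :: "'a set set" and x :: "'a cand \<Rightarrow> real"
  assumes "0 < p" and "p < 1"
    and "finite V"
    and "\<forall>e\<in>E. \<exists>u v. u \<in> V \<and> v \<in> V \<and> u \<noteq> v \<and> e = {u, v}"
    and "qrja_optimal p (IG p V E) x"
  shows "x VT - x VS = 1 \<and> (\<forall>u\<in>V. x (Vert u) - x VS \<in> {0, 1})"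
proof -
  let ?n = "card V"
  define w1 where "w1 = w1_of p ?n"
  define w2 where "w2 = w2_of p ?n"
  define g where "g = (\<lambda>(y::'a cand \<Rightarrow> real) u. \<bar>y VS - y (Vert u)\<bar> powr p + \<bar>y VT - y (Vert u)\<bar> powr p)"
  define h where "h = (\<lambda>(y::'a cand \<Rightarrow> real) u v. \<bar>y (Vert u) - y (Vert v) - 1\<bar> powr p)"
  define F where "F = (\<lambda>y::'a cand \<Rightarrow> real. qrja_loss p (IG p V E) y)"
  have Fdec: "\<And>y. F y = w1 * \<bar>y VT - y VS - 1\<bar> powr p + (\<Sum>u\<in>V. w2 * g y u)
      + (\<Sum>(u, v)\<in>EP E. h y u v)"
    unfolding F_def w1_def w2_def g_def h_def by (rule loss_IG[OF assms(3,4)])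
  have opt: "\<And>y. F x \<le> F y" using assms(5) by (simp add: F_def qrja_optimal_def)
  have w2pos: "w2 > 0" unfolding w2_def w2_of_def using assms(1,2)
    by (simp add: add_nonneg_pos)
  have w2eq: "w2 * (1 - p) = 2 * real ?n + (1 - p)"
    unfolding w2_def w2_of_def using assms(1,2) by (simp add: field_simps)
  have w1eq: "w1 = ?n * w2 + 1" unfolding w1_def w2_def w1_of_def by simp
  have EPV: "EP E \<subseteq> V \<times> V" by (rule EP_sub[OF assms(4)])
  have fEP: "finite (EP E)" using EPV assms(3) by (meson finite_SigmaI finite_subset)
  have EPsym: "\<And>u v. (u, v) \<in> EP E \<longleftrightarrow> (v, u) \<in> EP E" by (auto simp: EP_def insert_commute)
  define d where "d = x VT - x VS"
  define a where "a = (\<lambda>u. x (Vert u) - x VS)"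
  have stepA: "\<forall>u\<in>V. a u = 0 \<or> a u = d"
  proof (rule ccontr)
    assume "\<not> ?thesis"
    then obtain u0 where u0: "u0 \<in> V" "a u0 \<noteq> 0" "a u0 \<noteq> d" by blast
    define c where "c = a u0"
    obtain c' s L where cs: "c' = 0 \<or> c' = d" "s = \<bar>c - c'\<bar>" "0 < s" "s \<le> L" "\<bar>d\<bar> \<le> s + L"
        "\<bar>c\<bar> powr p + \<bar>d - c\<bar> powr p = s powr p + L powr p"
    proof (cases "\<bar>c\<bar> \<le> \<bar>c - d\<bar>")
      case True then show ?thesis using that[of 0 "\<bar>c\<bar>" "\<bar>d - c\<bar>"] u0 c_def
        by (auto simp: abs_minus_commute)
    next
      case False then show ?thesis using that[of d "\<bar>c - d\<bar>" "\<bar>c\<bar>"] u0 c_def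
        by (auto simp: abs_minus_commute add.commute)
    qed
    define x' where "x' = x(Vert u0 := x VS + c')"
    have xu0: "x (Vert u0) = x VS + c" by (simp add: c_def a_def)
    have gnew: "g x' u0 = \<bar>d\<bar> powr p"
      using cs(1) by (auto simp: x'_def d_def g_def abs_minus_commute)
    have gold: "g x u0 = s powr p + L powr p"
    proof -
      have "\<bar>x VT - (x VS + c)\<bar> = \<bar>d - c\<bar>" by (simp add: d_def)
      then show ?thesis using cs(6) by (simp add: g_def xu0)
    qed
    have Vsum: "(\<Sum>u\<in>V. w2 * g x' u) = (\<Sum>u\<in>V. w2 * g x u) - w2 * (s powr p + L powr p) + w2 * \<bar>d\<bar> powr p"
    proof -
      have "(\<Sum>u\<in>V. w2 * g x' u) = w2 * g x' u0 + (\<Sum>u\<in>V - {u0}. w2 * g x' u)"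
        using u0(1) assms(3) by (simp add: sum.remove)
      also have "(\<Sum>u\<in>V - {u0}. w2 * g x' u) = (\<Sum>u\<in>V - {u0}. w2 * g x u)"
        by (rule sum.cong) (auto simp: g_def x'_def)
      also have "(\<Sum>u\<in>V. w2 * g x u) = w2 * g x u0 + (\<Sum>u\<in>V - {u0}. w2 * g x u)"
        using u0(1) assms(3) by (simp add: sum.remove)
      ultimately show ?thesis using gnew gold by simp
    qed
    have sc: "\<bar>c' - c\<bar> = s" "\<bar>c - c'\<bar> = s" using cs(2) by (auto simp: abs_minus_commute)
    have edge_pt: "\<And>u v. h x' u v \<le> h x u v + (if u = u0 then s powr p else 0) + (if v = u0 then s powr p else 0)"
    proof -
      fix u v
      show "h x' u v \<le> h x u v + (if u = u0 then s powr p else 0) + (if v = u0 then s powr p else 0)"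
      proof (cases "u = u0"; cases "v = u0")
        assume "u = u0" "v = u0" then show ?thesis by (simp add: h_def x'_def)
      next
        assume "u = u0" "v \<noteq> u0"
        then have "x' (Vert u) - x' (Vert v) - 1 = (x (Vert u) - x (Vert v) - 1) + (c' - c)"
          by (simp add: x'_def xu0)
        then have e1: "h x' u v = \<bar>(x (Vert u) - x (Vert v) - 1) + (c' - c)\<bar> powr p" by (simp only: h_def)
        have i: "\<bar>(x (Vert u) - x (Vert v) - 1) + (c' - c)\<bar> powr p \<le> \<bar>x (Vert u) - x (Vert v) - 1\<bar> powr p + \<bar>c' - c\<bar> powr p"
          by (rule abs_powr_subadd) (use assms(1,2) in auto)
        have e2: "h x u v + (if u = u0 then s powr p else 0) + (if v = u0 then s powr p else 0) = h x u v + s powr p"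
          using \<open>u = u0\<close> \<open>v \<noteq> u0\<close> by simp
        show ?thesis using e1 e2 i[unfolded sc] unfolding h_def by linarith
      next
        assume "u \<noteq> u0" "v = u0"
        then have "x' (Vert u) - x' (Vert v) - 1 = (x (Vert u) - x (Vert v) - 1) + (c - c')"
          by (simp add: x'_def xu0)
        then have e1: "h x' u v = \<bar>(x (Vert u) - x (Vert v) - 1) + (c - c')\<bar> powr p" by (simp only: h_def)
        have i: "\<bar>(x (Vert u) - x (Vert v) - 1) + (c - c')\<bar> powr p \<le> \<bar>x (Vert u) - x (Vert v) - 1\<bar> powr p + \<bar>c - c'\<bar> powr p"
          by (rule abs_powr_subadd) (use assms(1,2) in auto)
        have e2: "h x u v + (if u = u0 then s powr p else 0) + (if v = u0 then s powr p else 0) = h x u v + s powr p"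
          using \<open>u \<noteq> u0\<close> \<open>v = u0\<close> by simp
        show ?thesis using e1 e2 i[unfolded sc] unfolding h_def by linarith
      next
        assume "u \<noteq> u0" "v \<noteq> u0" then show ?thesis by (simp add: h_def x'_def)
      qed
    qed
    have cnt1: "(\<Sum>(u, v)\<in>EP E. (if u = u0 then s powr p else 0)) \<le> ?n * s powr p"
    proof -
      have "(\<Sum>(u, v)\<in>EP E. (if u = u0 then s powr p else 0)) \<le> (\<Sum>(u, v)\<in>V \<times> V. (if u = u0 then s powr p else 0))"
        by (rule sum_mono2) (use EPV assms(3) in auto)
      also have "\<dots> = (\<Sum>u\<in>V. \<Sum>v\<in>V. (if u = u0 then s powr p else 0))"
        by (simp only: sum.cartesian_product)
      also have "\<dots> = ?n * s powr p" using u0(1) assms(3) by (simp add: if_distrib[of "\<lambda>t. real (card V) * t"] sum.delta cong: if_cong)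
      finally show ?thesis .
    qed
    have cnt2: "(\<Sum>(u, v)\<in>EP E. (if v = u0 then s powr p else 0)) \<le> ?n * s powr p"
    proof -
      have "(\<Sum>(u, v)\<in>EP E. (if v = u0 then s powr p else 0)) \<le> (\<Sum>(u, v)\<in>V \<times> V. (if v = u0 then s powr p else 0))"
        by (rule sum_mono2) (use EPV assms(3) in auto)
      also have "\<dots> = (\<Sum>u\<in>V. \<Sum>v\<in>V. (if v = u0 then s powr p else 0))"
        by (simp only: sum.cartesian_product)
      also have "\<dots> = ?n * s powr p" using u0(1) assms(3) by (simp add: if_distrib[of "\<lambda>t. real (card V) * t"] sum.delta cong: if_cong)
      finally show ?thesis .
    qed
    have "(\<Sum>(u, v)\<in>EP E. h x' u v) \<le> (\<Sum>(u, v)\<in>EP E. h x u v + (if u = u0 then s powr p else 0) + (if v = u0 then s powr p else 0))"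
      by (rule sum_mono) (use edge_pt in auto)
    also have "\<dots> = (\<Sum>(u, v)\<in>EP E. h x u v) + (\<Sum>(u, v)\<in>EP E. (if u = u0 then s powr p else 0)) + (\<Sum>(u, v)\<in>EP E. (if v = u0 then s powr p else 0))"
      by (simp add: sum.distrib split_def)
    finally have Esum: "(\<Sum>(u, v)\<in>EP E. h x' u v) \<le> (\<Sum>(u, v)\<in>EP E. h x u v) + 2 * real ?n * s powr p"
      using cnt1 cnt2 by simp
    have ineq: "w2 * \<bar>d\<bar> powr p + 2 * real ?n * s powr p < w2 * (s powr p + L powr p)"
      by (rule stepA_ineq) (use assms(1,2) cs w2eq w2pos in auto)
    have "x' VT = x VT" "x' VS = x VS" by (auto simp: x'_def)
    then have "F x' < F x" using Fdec[of x'] Fdec[of x] Vsum Esum ineq by simp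
    then show False using opt[of x'] by simp
  qed
  have Esym: "\<And>H. (\<Sum>(u, v)\<in>EP E. H u v) = (\<Sum>(u, v)\<in>EP E. H v u :: real)"
    by (rule sum.reindex_bij_witness[of _ prod.swap prod.swap]) (auto simp: EPsym)
  have dB: "d = 1"
  proof (rule ccontr)
    assume dn: "d \<noteq> 1"
    define b where "b = (\<lambda>u. if a u = 0 then 0 else (1::real))"
    define x' where "x' = (\<lambda>z. case z of VS \<Rightarrow> x VS | VT \<Rightarrow> x VS + 1 | Vert u \<Rightarrow> x VS + b u)"
    have first': "\<bar>x' VT - x' VS - 1\<bar> powr p = 0" by (simp add: x'_def)
    have gx': "\<And>u. g x' u = 1"
      by (auto simp: g_def x'_def b_def)
    have gx: "\<And>u. u \<in> V \<Longrightarrow> g x u = \<bar>d\<bar> powr p"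
    proof -
      fix u assume "u \<in> V"
      then have "a u = 0 \<or> a u = d" using stepA by blast
      then show "g x u = \<bar>d\<bar> powr p"
      proof
        assume "a u = 0" then have "x (Vert u) = x VS" by (simp add: a_def)
        then show ?thesis by (simp add: g_def d_def)
      next
        assume "a u = d" then have "x (Vert u) = x VT" by (simp add: a_def d_def)
        then show ?thesis by (simp add: g_def d_def abs_minus_commute)
      qed
    qed
    have V': "(\<Sum>u\<in>V. w2 * g x' u) = real ?n * w2" by (simp add: gx')
    have V0: "(\<Sum>u\<in>V. w2 * g x u) = real ?n * w2 * \<bar>d\<bar> powr p" by (simp add: gx)
    have pt: "\<And>u v. (u, v) \<in> EP E \<Longrightarrow> h x' u v + h x' v u \<le> h x u v + h x v u"
    proof -
      fix u v assume "(u, v) \<in> EP E"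
      then have uv: "u \<in> V" "v \<in> V" using EPV by auto
      have hh: "x (Vert u) - x (Vert v) = a u - a v" "x' (Vert u) - x' (Vert v) = b u - b v"
        by (auto simp: a_def x'_def)
      show "h x' u v + h x' v u \<le> h x u v + h x v u"
        unfolding h_def
        using pair_ineq[of p "a u" d "a v"] assms(1,2) stepA uv
        by (simp add: b_def a_def x'_def)
    qed
    have "2 * (\<Sum>(u, v)\<in>EP E. h x' u v) = (\<Sum>(u, v)\<in>EP E. h x' u v + h x' v u)"
      using Esym[of "h x'"] by (simp add: sum.distrib split_def)
    also have "\<dots> \<le> (\<Sum>(u, v)\<in>EP E. h x u v + h x v u)"
      by (rule sum_mono) (use pt in auto)
    also have "\<dots> = 2 * (\<Sum>(u, v)\<in>EP E. h x u v)"
      using Esym[of "h x"] by (simp add: sum.distrib split_def)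
    finally have Eb: "(\<Sum>(u, v)\<in>EP E. h x' u v) \<le> (\<Sum>(u, v)\<in>EP E. h x u v)" by simp
    have one: "1 \<le> \<bar>d\<bar> powr p + \<bar>d - 1\<bar> powr p"
      using abs_powr_subadd[of p d "1 - d"] assms(1,2) by (simp add: abs_minus_commute)
    have pos: "\<bar>d - 1\<bar> powr p > 0" using dn by simp
    have "real ?n * w2 \<le> real ?n * w2 * \<bar>d\<bar> powr p + real ?n * w2 * \<bar>d - 1\<bar> powr p"
      using mult_left_mono[OF one, of "real ?n * w2"] w2pos by (simp add: algebra_simps)
    moreover have Fx: "F x = w1 * \<bar>d - 1\<bar> powr p + real ?n * w2 * \<bar>d\<bar> powr p + (\<Sum>(u, v)\<in>EP E. h x u v)"
      using Fdec[of x] V0 by (simp add: d_def)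
    moreover have Fx': "F x' = real ?n * w2 + (\<Sum>(u, v)\<in>EP E. h x' u v)"
      using Fdec[of x'] V' first' by simp
    moreover have "w1 * \<bar>d - 1\<bar> powr p = real ?n * w2 * \<bar>d - 1\<bar> powr p + \<bar>d - 1\<bar> powr p"
      using w1eq by (simp add: algebra_simps)
    ultimately have "F x' < F x" using Eb pos by linarith
    then show False using opt[of x'] by simp
  qed
  show ?thesis
  proof
    show "x VT - x VS = 1" using dB by (simp add: d_def)
    show "\<forall>u\<in>V. x (Vert u) - x VS \<in> {0, 1}" using stepA dB by (simp add: a_def)
  qed
qed

end
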